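(* Let $\mathcal{P}=q^*(t)$, $t\in[0,1]$, be any collision-free minimizer of \[\inf_{(a_1,a_2,b_1,b_2)\in\mathcal{S}}\ \inf_{\{q\in H^1([0,1],\chi):\ q(0)=Q_{s_1},\ q(1)=Q_{e_1}\}}\mathcal{A}(q),\] and let $q^*(t)$, $t\in\mathbb{R}$, also denote its extension to a solution of the Newtonian equations $\ddot q_i=\sum_{j\neq i}\frac{q_j-q_i}{|q_j-q_i|^3}$ defined for all $t\in\mathbb{R}$ (which is periodic of period $4$). Then for all $t\in\mathbb{R}$, \[q^*_i(t)=R_xq^*_i(-t)\ (i=1,2,3),\qquad q^*_1(t+2)=R_xR_yq^*_1(t),\quad q^*_2(t+2)=R_xR_yq^*_3(t),\quad q^*_3(t+2)=R_xR_yq^*_2(t),\] where $R_x=\begin{bmatrix}1&0\\0&-1\end{bmatrix}$ and $R_y=\begin{bmatrix}-1&0\\0&1\end{bmatrix}$ act on the position vectors $q^*_i\in\mathbb{R}^2$ (viewed as column vectors).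
   Context: Planar three-body problem with masses $m_1=m_2=m_3=1$; $q_i=(q_{ix},q_{iy})\in\mathbb{R}^2$; $\chi=\{q: q_1+q_2+q_3=0\}$; $\mathcal{A}(q)=\int_0^1\big(\tfrac12\sum_{i=1}^3|\dot q_i|^2+\sum_{i<j}\frac{1}{|q_i-q_j|}\big)dt$. $Q_{s_1}$: $q_1=(-2a_1-a_2,0)$, $q_2=(a_1-a_2,0)$, $q_3=(a_1+2a_2,0)$; $Q_{e_1}$: $q_1=(0,-2b_1)$, $q_2=(-b_2,b_1)$, $q_3=(b_2,b_1)$; $\mathcal{S}=\{a_1\ge0,\ a_2\ge0,\ b_1,b_2\in\mathbb{R}\}$. *)

theory Defs
  imports "HOL-Analysis.Analysis"
begin

text \<open>Bodies are indexed by 1, 2, 3; a motion is q :: nat => real => real^2,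
  q i t being the position of body i at time t.\<close>

type_synonym motion = "nat \<Rightarrow> real \<Rightarrow> real^2"

text \<open>H^1([0,1]) for a single R^2-valued coordinate path: absolutely continuous
  with square-integrable derivative, i.e. the indefinite integral of an L^2 function.\<close>
definition H1_01 :: "(real \<Rightarrow> real^2) \<Rightarrow> bool" where
  "H1_01 f \<longleftrightarrow> (\<exists>v. v \<in> borel_measurable lborel \<and>
      set_integrable lborel {0..1} (\<lambda>t. (norm (v t))^2) \<and>
      (\<forall>t\<in>{0..1}. f t = f 0 + (LINT s:{0..t}|lborel. v s)))"

definition pairpot :: "real^2 \<Rightarrow> real^2 \<Rightarrow> ennreal" where
  "pairpot x y = (if x = y then \<infinity> else ennreal (1 / norm (x - y)))"

definition action :: "motion \<Rightarrow> ennreal" where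
  "action q = (\<integral>\<^sup>+ t\<in>{0..1}.
      ennreal ((1/2) * (\<Sum>i\<in>{1,2,3}. (norm (vector_derivative (q i) (at t)))^2))
      + pairpot (q 1 t) (q 2 t) + pairpot (q 1 t) (q 3 t) + pairpot (q 2 t) (q 3 t) \<partial>lborel)"

definition Qs1 :: "real \<Rightarrow> real \<Rightarrow> nat \<Rightarrow> real^2" where
  "Qs1 a1 a2 i = (if i = 1 then vector [-2*a1 - a2, 0]
                  else if i = 2 then vector [a1 - a2, 0]
                  else vector [a1 + 2*a2, 0])"

definition Qe1 :: "real \<Rightarrow> real \<Rightarrow> nat \<Rightarrow> real^2" where
  "Qe1 b1 b2 i = (if i = 1 then vector [0, -2*b1]
                  else if i = 2 then vector [-b2, b1]
                  else vector [b2, b1])"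

definition admissible :: "motion \<Rightarrow> bool" where
  "admissible q \<longleftrightarrow> (\<forall>i\<in>{1,2,3}. H1_01 (q i)) \<and>
     (\<forall>t\<in>{0..1}. q 1 t + q 2 t + q 3 t = 0) \<and>
     (\<exists>a1 a2 b1 b2. a1 \<ge> 0 \<and> a2 \<ge> 0 \<and>
        (\<forall>i\<in>{1,2,3}. q i 0 = Qs1 a1 a2 i \<and> q i 1 = Qe1 b1 b2 i))"

definition Rx :: "real^2^2" where "Rx = vector [vector [1, 0], vector [0, -1]]"
definition Ry :: "real^2^2" where "Ry = vector [vector [-1, 0], vector [0, 1]]"

end

theory Submission
  imports Defs
begin


definition gf :: "real^2 \<Rightarrow> real^2" where "gf x = (1 / norm x ^ 3) *\<^sub>R x"

lemma has_real_derivative_inner: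
  fixes f g :: "real \<Rightarrow> 'a::real_inner"
  assumes "(f has_vector_derivative f') (at t within S)" "(g has_vector_derivative g') (at t within S)"
  shows "((\<lambda>t. inner (f t) (g t)) has_real_derivative (inner f' (g t) + inner (f t) g')) (at t within S)"
proof -
  have "((\<lambda>t. inner (f t) (g t)) has_derivative (\<lambda>h. inner (f t) (h *\<^sub>R g') + inner (h *\<^sub>R f') (g t))) (at t within S)"
    using has_derivative_inner[OF assms[unfolded has_vector_derivative_def]] .
  then show ?thesis unfolding has_field_derivative_def
    by (rule has_derivative_eq_rhs) (auto simp: algebra_simps fun_eq_iff)
qed

lemma deriv_inv_norm:
  fixes a b :: "'a::real_inner"
  assumes "a + e *\<^sub>R b \<noteq> 0"
  shows "((\<lambda>e. 1 / norm (a + e *\<^sub>R b)) has_real_derivative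
     (- inner (a + e *\<^sub>R b) b / norm (a + e *\<^sub>R b) ^ 3)) (at e within S)"
proof -
  let ?z = "\<lambda>e. a + e *\<^sub>R b"
  have zd: "(?z has_vector_derivative b) (at e within S)"
    by (auto intro!: derivative_eq_intros)
  have s: "((\<lambda>e. inner (?z e) (?z e)) has_real_derivative (2 * inner (?z e) b)) (at e within S)"
    using has_real_derivative_inner[OF zd zd] by (simp add: inner_commute)
  have pos: "0 < inner (?z e) (?z e)" using assms by simp
  have d1: "((\<lambda>e. sqrt (inner (?z e) (?z e))) has_real_derivative (inverse (sqrt (inner (?z e) (?z e))) / 2 * (2 * inner (?z e) b))) (at e within S)"
    by (rule DERIV_chain2[OF DERIV_real_sqrt[OF pos] s])
  have nz: "sqrt (inner (?z e) (?z e)) \<noteq> 0" using pos by simp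
  have d2: "((\<lambda>e. inverse (sqrt (inner (?z e) (?z e)))) has_real_derivative
      - (inverse (sqrt (inner (?z e) (?z e))) / 2 * (2 * inner (?z e) b) * inverse (sqrt (inner (?z e) (?z e)) ^ Suc (Suc 0)))) (at e within S)"
    by (rule DERIV_inverse_fun[OF d1 nz])
  have eqf: "(\<lambda>e. 1 / norm (?z e)) = (\<lambda>e. inverse (sqrt (inner (?z e) (?z e))))"
    by (simp add: norm_eq_sqrt_inner divide_inverse)
  define n where "n = norm (?z e)"
  have n: "n > 0" "sqrt (inner (?z e) (?z e)) = n" using assms by (auto simp: n_def norm_eq_sqrt_inner)
  have "- (inverse (sqrt (inner (?z e) (?z e))) / 2 * (2 * inner (?z e) b) * inverse (sqrt (inner (?z e) (?z e)) ^ Suc (Suc 0)))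
      = - inner (?z e) b / n ^ 3"
    unfolding n(2) using n(1) by (simp add: field_simps power2_eq_square power3_eq_cube)
  with d2 show ?thesis unfolding eqf n_def by simp
qed

lemma inv3_diff:
  fixes a b r :: real
  assumes "r \<le> a" "r \<le> b" "0 < r"
  shows "\<bar>1/a^3 - 1/b^3\<bar> * b \<le> 3/r^3 * \<bar>a - b\<bar>"
proof -
  have a: "0 < a" and b: "0 < b" using assms by auto
  have r3a: "r^3 \<le> a^3" "r^3 \<le> b^3" using assms by (auto intro: power_mono)
  have e: "1/a^3 - 1/b^3 = (b - a) * (a^2 + a*b + b^2) / (a^3 * b^3)"
    using a b by (simp add: field_simps power2_eq_square power3_eq_cube)
  have k1: "r^3 \<le> a * b^2" using mult_mono[OF assms(1) mult_mono[OF assms(2) assms(2)]] assms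
    by (simp add: power2_eq_square power3_eq_cube)
  have k2: "r^3 \<le> a^2 * b" using mult_mono[OF mult_mono[OF assms(1) assms(1)] assms(2)] assms
    by (simp add: power2_eq_square power3_eq_cube)
  have "a^2 * r^3 \<le> a^2 * (a * b^2)" using k1 by (simp add: mult_left_mono)
  moreover have "a*b * r^3 \<le> a*b * (a^2 * b)" using k2 a b by (simp add: mult_left_mono)
  moreover have "b^2 * r^3 \<le> b^2 * a^3" using r3a by (simp add: mult_left_mono)
  ultimately have main: "(a^2 + a*b + b^2) * r^3 \<le> 3 * (a^3 * b^2)"
    by (simp add: algebra_simps power2_eq_square power3_eq_cube)
  have P: "0 < a^2 + a*b + b^2" using a b by (simp add: add_pos_pos)
  have Q: "0 < a^3 * b^3" using a b by simp
  have "\<bar>1/a^3 - 1/b^3\<bar> = \<bar>a - b\<bar> * ((a^2 + a*b + b^2) / (a^3 * b^3))"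
    unfolding e using P Q a b by (simp add: abs_mult abs_divide abs_minus_commute)
  hence "\<bar>1/a^3 - 1/b^3\<bar> * b = \<bar>a - b\<bar> * ((a^2 + a*b + b^2) / (a^3 * b^3) * b)" by simp
  also have "(a^2 + a*b + b^2) / (a^3 * b^3) * b = (a^2 + a*b + b^2) / (a^3 * b^2)"
    using a b by (simp add: field_simps power2_eq_square power3_eq_cube)
  finally have "\<bar>1/a^3 - 1/b^3\<bar> * b = \<bar>a - b\<bar> * ((a^2 + a*b + b^2) / (a^3 * b^2))" .
  also have "(a^2 + a*b + b^2) / (a^3 * b^2) \<le> 3 / r^3"
    using main a b assms(3) by (simp add: field_simps)
  hence "\<bar>a - b\<bar> * ((a^2 + a*b + b^2) / (a^3 * b^2)) \<le> \<bar>a - b\<bar> * (3/r^3)"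
    by (metis abs_ge_zero mult_left_mono)
  finally show ?thesis by (simp add: mult.commute)
qed

lemma gf_lip:
  assumes "r \<le> norm x" "r \<le> norm y" "0 < r"
  shows "norm (gf x - gf y) \<le> 4/r^3 * norm (x - y)"
proof -
  have xy: "gf x - gf y = (1 / norm x ^ 3) *\<^sub>R (x - y) + (1/norm x^3 - 1/norm y^3) *\<^sub>R y"
    unfolding gf_def by (simp add: algebra_simps)
  have n1: "norm ((1 / norm x ^ 3) *\<^sub>R (x - y)) \<le> 1/r^3 * norm (x - y)"
  proof -
    have "r^3 \<le> norm x ^ 3" using assms by (auto intro: power_mono)
    moreover have "0 < r^3" using assms by simp
    ultimately have "1 / norm x ^ 3 \<le> 1/r^3" by (intro frac_le) auto
    moreover have "norm ((1 / norm x ^ 3) *\<^sub>R (x - y)) = 1 / norm x ^ 3 * norm (x - y)" by simp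
    ultimately show ?thesis by (metis norm_ge_zero mult_right_mono)
  qed
  have n2: "norm ((1/norm x^3 - 1/norm y^3) *\<^sub>R y) \<le> 3/r^3 * norm (x - y)"
  proof -
    have "norm ((1/norm x^3 - 1/norm y^3) *\<^sub>R y) = \<bar>1/norm x^3 - 1/norm y^3\<bar> * norm y" by simp
    also have "\<dots> \<le> 3/r^3 * \<bar>norm x - norm y\<bar>" by (rule inv3_diff[OF assms])
    also have "\<dots> \<le> 3/r^3 * norm (x - y)" using assms by (intro mult_left_mono norm_triangle_ineq3) auto
    finally show ?thesis .
  qed
  have "norm (gf x - gf y) \<le> 1/r^3 * norm (x - y) + 3/r^3 * norm (x - y)"
    unfolding xy using norm_triangle_le[OF add_mono[OF n1 n2]] by simp
  thus ?thesis by (simp add: field_simps)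
qed

lemma gronwall0:
  fixes E E' :: "real \<Rightarrow> real"
  assumes "lo \<le> t0" "t0 \<le> hi"
    and d: "\<And>t. t \<in> {lo..hi} \<Longrightarrow> (E has_real_derivative E' t) (at t)"
    and b: "\<And>t. t \<in> {lo..hi} \<Longrightarrow> \<bar>E' t\<bar> \<le> C * E t"
    and nn: "\<And>t. t \<in> {lo..hi} \<Longrightarrow> 0 \<le> E t"
    and z: "E t0 = 0"
    and t: "t \<in> {lo..hi}"
  shows "E t = 0"
proof (cases "t0 \<le> t")
  case True
  define h where "h s = E s * exp (- C * s)" for s
  have "h t \<le> h t0"
  proof (rule DERIV_nonpos_imp_nonincreasing[OF True])
    fix x assume x: "t0 \<le> x" "x \<le> t"
    hence xi: "x \<in> {lo..hi}" using t assms by auto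
    show "\<exists>y. DERIV h x :> y \<and> y \<le> 0"
    proof (intro exI conjI)
      show "DERIV h x :> (E' x - C * E x) * exp (- C * x)"
        unfolding h_def by (auto intro!: derivative_eq_intros d[OF xi] simp: algebra_simps)
      show "(E' x - C * E x) * exp (- C * x) \<le> 0"
        using b[OF xi] by (auto intro!: mult_nonpos_nonneg)
    qed
  qed
  hence "E t * exp (- C * t) \<le> 0" using z by (simp add: h_def)
  hence "E t \<le> 0" by (simp add: mult_le_0_iff)
  thus ?thesis using nn[OF t] by simp
next
  case False
  define h where "h s = E s * exp (C * s)" for s
  have le: "t \<le> t0" using False by simp
  have "h t \<le> h t0"
  proof (rule DERIV_nonneg_imp_nondecreasing[OF le])
    fix x assume x: "t \<le> x" "x \<le> t0"
    hence xi: "x \<in> {lo..hi}" using t assms by auto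
    show "\<exists>y. DERIV h x :> y \<and> y \<ge> 0"
    proof (intro exI conjI)
      show "DERIV h x :> (E' x + C * E x) * exp (C * x)"
        unfolding h_def by (auto intro!: derivative_eq_intros d[OF xi] simp: algebra_simps)
      show "(E' x + C * E x) * exp (C * x) \<ge> 0"
        using b[OF xi] by (auto intro!: mult_nonneg_nonneg)
    qed
  qed
  hence "E t * exp (C * t) \<le> 0" using z by (simp add: h_def)
  hence "E t \<le> 0" by (simp add: mult_le_0_iff)
  thus ?thesis using nn[OF t] by simp
qed

definition force :: "motion \<Rightarrow> nat \<Rightarrow> real \<Rightarrow> real^2" where
  "force q i t = (\<Sum>j\<in>{1,2,3} - {i}. (1 / norm (q j t - q i t) ^ 3) *\<^sub>R (q j t - q i t))"

definition sol :: "motion \<Rightarrow> motion \<Rightarrow> bool" where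
  "sol q v \<longleftrightarrow> (\<forall>i\<in>{1,2,3}. \<forall>t. (q i has_vector_derivative v i t) (at t) \<and>
          (v i has_vector_derivative force q i t) (at t))"

definition nocoll :: "motion \<Rightarrow> bool" where
  "nocoll q \<longleftrightarrow> (\<forall>t i j. i \<in> {1,2,3} \<longrightarrow> j \<in> {1,2,3} \<longrightarrow> i \<noteq> j \<longrightarrow> q i t \<noteq> q j t)"

lemma force_expand:
  "force q 1 t = gf (q 2 t - q 1 t) + gf (q 3 t - q 1 t)"
  "force q 2 t = gf (q 1 t - q 2 t) + gf (q 3 t - q 2 t)"
  "force q 3 t = gf (q 1 t - q 3 t) + gf (q 2 t - q 3 t)"
  by (simp_all add: force_def gf_def insert_Diff_if)

lemma mindist:
  fixes f :: "real \<Rightarrow> real^2"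
  assumes "continuous_on {lo..hi} f" "\<And>t. f t \<noteq> 0" "lo \<le> hi"
  shows "\<exists>r>0. \<forall>t\<in>{lo..hi}. r \<le> norm (f t)"
proof -
  have "continuous_on {lo..hi} (\<lambda>t. norm (f t))" using assms(1) by (intro continuous_intros)
  from continuous_attains_inf[OF compact_Icc _ this] assms(3)
  obtain x where "x \<in> {lo..hi}" "\<forall>y\<in>{lo..hi}. norm (f x) \<le> norm (f y)" by auto
  thus ?thesis using assms(2)[of x] by (intro exI[of _ "norm (f x)"]) auto
qed

lemma arith_bound:
  fixes x1 x2 x3 y1 y2 y3 d1 d2 d3 a1 a2 a3 b1 b2 b3 K :: real
  assumes "0 \<le> x1" "0 \<le> x2" "0 \<le> x3" "0 \<le> y1" "0 \<le> y2" "0 \<le> y3" "0 \<le> K"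
    "\<bar>a1\<bar> \<le> x1 * y1" "\<bar>a2\<bar> \<le> x2 * y2" "\<bar>a3\<bar> \<le> x3 * y3"
    "\<bar>b1\<bar> \<le> y1 * d1" "\<bar>b2\<bar> \<le> y2 * d2" "\<bar>b3\<bar> \<le> y3 * d3"
    "d1 \<le> 2*K*(x1+x2+x3)" "d2 \<le> 2*K*(x1+x2+x3)" "d3 \<le> 2*K*(x1+x2+x3)"
  shows "\<bar>2*a1 + 2*b1 + (2*a2 + 2*b2) + (2*a3 + 2*b3)\<bar> \<le> (1 + 6*K) * (x1^2+y1^2 + (x2^2+y2^2) + (x3^2+y3^2))"
proof -
  let ?S = "x1+x2+x3" and ?Y = "y1+y2+y3"
  have q: "2*x*y \<le> x^2+y^2" for x y :: real using sum_squares_ge_zero[of "x-y" 0]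
    by (simp add: power2_eq_square algebra_simps)
  have c1: "y1 * d1 \<le> y1 * (2*K*?S)" using assms by (intro mult_left_mono) auto
  have c2: "y2 * d2 \<le> y2 * (2*K*?S)" using assms by (intro mult_left_mono) auto
  have c3: "y3 * d3 \<le> y3 * (2*K*?S)" using assms by (intro mult_left_mono) auto
  have yS: "2 * ?Y * ?S \<le> ?Y^2 + ?S^2" by (rule q)
  have Y2: "?Y^2 \<le> 3*(y1^2+y2^2+y3^2)" using q[of y1 y2] q[of y1 y3] q[of y2 y3]
    by (simp add: power2_eq_square algebra_simps)
  have S2: "?S^2 \<le> 3*(x1^2+x2^2+x3^2)" using q[of x1 x2] q[of x1 x3] q[of x2 x3]
    by (simp add: power2_eq_square algebra_simps)
  have "2 * ?Y * ?S \<le> 3*(y1^2+y2^2+y3^2) + 3*(x1^2+x2^2+x3^2)" using yS Y2 S2 by linarith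
  hence KK: "K * (2 * ?Y * ?S) \<le> K * (3*(y1^2+y2^2+y3^2) + 3*(x1^2+x2^2+x3^2))"
    using assms(7) by (rule mult_left_mono)
  have "y1 * (2*K*?S) + y2 * (2*K*?S) + y3 * (2*K*?S) = K * (2 * ?Y * ?S)" by (simp add: algebra_simps)
  hence "\<bar>b1\<bar> + \<bar>b2\<bar> + \<bar>b3\<bar> \<le> K * (3*(y1^2+y2^2+y3^2) + 3*(x1^2+x2^2+x3^2))"
    using c1 c2 c3 KK assms(11-13) by linarith
  moreover have "2*\<bar>a1\<bar> + 2*\<bar>a2\<bar> + 2*\<bar>a3\<bar> \<le> x1^2+y1^2 + (x2^2+y2^2) + (x3^2+y3^2)"
    using q[of x1 y1] q[of x2 y2] q[of x3 y3] assms(8-10) by linarith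
  ultimately show ?thesis by (simp add: algebra_simps)
qed

lemma sol_cont:
  assumes "sol q v" "i \<in> {1,2,3}"
  shows "continuous_on S (q i)" "continuous_on S (v i)"
  using assms unfolding sol_def
  by (meson continuous_at_imp_continuous_on has_vector_derivative_continuous)+

lemma pair_mindist:
  assumes "sol q v" "nocoll q" "lo \<le> hi"
  shows "\<exists>r>0. \<forall>t\<in>{lo..hi}. \<forall>i\<in>{1::nat,2,3}. \<forall>j\<in>{1::nat,2,3}. i \<noteq> j \<longrightarrow> r \<le> norm (q j t - q i t)"
proof -
  have c: "continuous_on {lo..hi} (\<lambda>t. q j t - q i t)" if "i \<in> {1,2,3}" "j \<in> {1,2,3}" for i j :: nat
    using sol_cont[OF assms(1) that(1)] sol_cont[OF assms(1) that(2)] by (intro continuous_intros)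
  have nz: "q j t - q i t \<noteq> 0" if "i \<in> {1,2,3}" "j \<in> {1,2,3}" "i \<noteq> j" for i j :: nat and t
    using assms(2) that unfolding nocoll_def by auto
  obtain r1 where r1: "r1 > 0" "\<forall>t\<in>{lo..hi}. r1 \<le> norm (q 2 t - q 1 t)"
    using mindist[OF c nz assms(3), of 1 2] by auto
  obtain r2 where r2: "r2 > 0" "\<forall>t\<in>{lo..hi}. r2 \<le> norm (q 3 t - q 1 t)"
    using mindist[OF c nz assms(3), of 1 3] by auto
  obtain r3 where r3: "r3 > 0" "\<forall>t\<in>{lo..hi}. r3 \<le> norm (q 3 t - q 2 t)"
    using mindist[OF c nz assms(3), of 2 3] by auto
  show ?thesis
  proof (intro exI[of _ "min r1 (min r2 r3)"] conjI ballI impI)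
    show "0 < min r1 (min r2 r3)" using r1 r2 r3 by simp
    fix t and i j :: nat assume t: "t \<in> {lo..hi}" and ij: "i \<in> {1,2,3}" "j \<in> {1,2,3}" "i \<noteq> j"
    have s: "norm (q j t - q i t) = norm (q i t - q j t)" by (rule norm_minus_commute)
    show "min r1 (min r2 r3) \<le> norm (q j t - q i t)"
      using ij r1(2)[rule_format, OF t] r2(2)[rule_format, OF t] r3(2)[rule_format, OF t] s
      by auto
  qed
qed

lemma force_diff:
  assumes "r > 0"
    and q: "\<forall>i\<in>{1::nat,2,3}. \<forall>j\<in>{1::nat,2,3}. i \<noteq> j \<longrightarrow> r \<le> norm (q j t - q i t)"
    and p: "\<forall>i\<in>{1::nat,2,3}. \<forall>j\<in>{1::nat,2,3}. i \<noteq> j \<longrightarrow> r \<le> norm (p j t - p i t)"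
    and i: "i \<in> {1,2,3}"
  shows "norm (force q i t - force p i t) \<le> 2 * (4/r^3) * (norm (q 1 t - p 1 t) + norm (q 2 t - p 2 t) + norm (q 3 t - p 3 t))"
proof -
  let ?K = "4/r^3"
  let ?D = "\<lambda>j. norm (q j t - p j t)"
  have K: "0 \<le> ?K" using assms by simp
  have g: "norm (gf (q j t - q k t) - gf (p j t - p k t)) \<le> ?K * (?D j + ?D k)"
    if "j \<in> {1,2,3}" "k \<in> {1,2,3}" "j \<noteq> k" for j k
  proof -
    have "norm (gf (q j t - q k t) - gf (p j t - p k t)) \<le> ?K * norm ((q j t - q k t) - (p j t - p k t))"
      using q p that assms(1) by (intro gf_lip) auto
    also have "norm ((q j t - q k t) - (p j t - p k t)) \<le> ?D j + ?D k"
      using norm_triangle_ineq4[of "q j t - p j t" "q k t - p k t"] by (simp add: algebra_simps)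
    hence "?K * norm ((q j t - q k t) - (p j t - p k t)) \<le> ?K * (?D j + ?D k)"
      using K by (rule mult_left_mono)
    finally show ?thesis .
  qed
  have tri: "norm (a - b + (c - d)) \<le> norm (a - b) + norm (c - d)" for a b c d :: "real^2"
    by (rule norm_triangle_ineq)
  have D: "0 \<le> ?D 1" "0 \<le> ?D 2" "0 \<le> ?D 3" by auto
  from i consider "i = 1" | "i = 2" | "i = 3" by auto
  then show ?thesis
  proof cases
    case 1
    have e: "force q i t - force p i t = (gf (q 2 t - q 1 t) - gf (p 2 t - p 1 t)) + (gf (q 3 t - q 1 t) - gf (p 3 t - p 1 t))"
      unfolding 1 force_expand by (simp add: algebra_simps)
    have "norm (force q i t - force p i t) \<le> ?K * (?D 2 + ?D 1) + ?K * (?D 3 + ?D 1)"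
      unfolding e by (rule order_trans[OF norm_triangle_ineq add_mono[OF g g]]) auto
    moreover have "?K * (?D 2 + ?D 1) + ?K * (?D 3 + ?D 1) = 2 * ?K * (?D 1 + ?D 2 + ?D 3) - ?K * (?D 2 + ?D 3)"
      by (simp add: algebra_simps)
    moreover have "0 \<le> ?K * (?D 2 + ?D 3)" using K D by simp
    ultimately show ?thesis by linarith
  next
    case 2
    have e: "force q i t - force p i t = (gf (q 1 t - q 2 t) - gf (p 1 t - p 2 t)) + (gf (q 3 t - q 2 t) - gf (p 3 t - p 2 t))"
      unfolding 2 force_expand by (simp add: algebra_simps)
    have "norm (force q i t - force p i t) \<le> ?K * (?D 1 + ?D 2) + ?K * (?D 3 + ?D 2)"
      unfolding e by (rule order_trans[OF norm_triangle_ineq add_mono[OF g g]]) auto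
    moreover have "?K * (?D 1 + ?D 2) + ?K * (?D 3 + ?D 2) = 2 * ?K * (?D 1 + ?D 2 + ?D 3) - ?K * (?D 1 + ?D 3)"
      by (simp add: algebra_simps)
    moreover have "0 \<le> ?K * (?D 1 + ?D 3)" using K D by simp
    ultimately show ?thesis by linarith
  next
    case 3
    have e: "force q i t - force p i t = (gf (q 1 t - q 3 t) - gf (p 1 t - p 3 t)) + (gf (q 2 t - q 3 t) - gf (p 2 t - p 3 t))"
      unfolding 3 force_expand by (simp add: algebra_simps)
    have "norm (force q i t - force p i t) \<le> ?K * (?D 1 + ?D 3) + ?K * (?D 2 + ?D 3)"
      unfolding e by (rule order_trans[OF norm_triangle_ineq add_mono[OF g g]]) auto
    moreover have "?K * (?D 1 + ?D 3) + ?K * (?D 2 + ?D 3) = 2 * ?K * (?D 1 + ?D 2 + ?D 3) - ?K * (?D 1 + ?D 2)"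
      by (simp add: algebra_simps)
    moreover have "0 \<le> ?K * (?D 1 + ?D 2)" using K D by simp
    ultimately show ?thesis by linarith
  qed
qed

lemma uniqueness:
  assumes sq: "sol q v" and sp: "sol p w" and nq: "nocoll q" and np: "nocoll p"
    and init: "\<forall>i\<in>{1,2,3}. q i t0 = p i t0 \<and> v i t0 = w i t0"
    and i: "i \<in> {1,2,3}"
  shows "q i T = p i T"
proof -
  define lo where "lo = min t0 T"
  define hi where "hi = max t0 T"
  have lohi: "lo \<le> t0" "t0 \<le> hi" "T \<in> {lo..hi}" "lo \<le> hi" by (auto simp: lo_def hi_def)
  obtain r1 where r1: "r1 > 0" "\<forall>t\<in>{lo..hi}. \<forall>i\<in>{1::nat,2,3}. \<forall>j\<in>{1::nat,2,3}. i \<noteq> j \<longrightarrow> r1 \<le> norm (q j t - q i t)"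
    using pair_mindist[OF sq nq lohi(4)] by auto
  obtain r2 where r2: "r2 > 0" "\<forall>t\<in>{lo..hi}. \<forall>i\<in>{1::nat,2,3}. \<forall>j\<in>{1::nat,2,3}. i \<noteq> j \<longrightarrow> r2 \<le> norm (p j t - p i t)"
    using pair_mindist[OF sp np lohi(4)] by auto
  define r where "r = min r1 r2"
  have r: "r > 0" using r1 r2 by (simp add: r_def)
  have rq: "\<forall>i\<in>{1::nat,2,3}. \<forall>j\<in>{1::nat,2,3}. i \<noteq> j \<longrightarrow> r \<le> norm (q j t - q i t)"
    and rp: "\<forall>i\<in>{1::nat,2,3}. \<forall>j\<in>{1::nat,2,3}. i \<noteq> j \<longrightarrow> r \<le> norm (p j t - p i t)"
    if "t \<in> {lo..hi}" for t
    using r1(2)[rule_format, OF that] r2(2)[rule_format, OF that] unfolding r_def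
    by (meson min.coboundedI1 min.coboundedI2 order_trans)+
  define K where "K = 4 / r^3"
  have K: "0 \<le> K" using r by (simp add: K_def)
  define dq where "dq j t = q j t - p j t" for j t
  define dv where "dv j t = v j t - w j t" for j t
  define dF where "dF j t = force q j t - force p j t" for j t
  define E where "E t = (\<Sum>j\<in>{1::nat,2,3}. inner (dq j t) (dq j t) + inner (dv j t) (dv j t))" for t
  define E' where "E' t = (\<Sum>j\<in>{1::nat,2,3}. (inner (dv j t) (dq j t) + inner (dq j t) (dv j t)) +
      (inner (dF j t) (dv j t) + inner (dv j t) (dF j t)))" for t
  have dqd: "(dq j has_vector_derivative dv j t) (at t)" and dvd: "(dv j has_vector_derivative dF j t) (at t)"
    if "j \<in> {1,2,3}" for j t
    using sq sp that unfolding sol_def dq_def[abs_def] dv_def[abs_def] dF_def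
    by (auto intro!: derivative_eq_intros)
  have Ed: "(E has_real_derivative E' t) (at t)" for t
    unfolding E_def[abs_def] E'_def
    by (intro DERIV_sum DERIV_add has_real_derivative_inner dqd dvd) auto
  have Eb: "\<bar>E' t\<bar> \<le> (1 + 6*K) * E t" if t: "t \<in> {lo..hi}" for t
  proof -
    have fd: "norm (dF j t) \<le> 2*K*(norm (dq 1 t) + norm (dq 2 t) + norm (dq 3 t))" if "j \<in> {1,2,3}" for j
      using force_diff[of r q t p j, OF r rq[OF t] rp[OF t] that] unfolding dF_def dq_def K_def by simp
    have cs: "\<bar>inner a b\<bar> \<le> norm a * norm b" for a b :: "real^2" by (rule Cauchy_Schwarz_ineq2)
    have "\<bar>E' t\<bar> = \<bar>2*inner (dq 1 t) (dv 1 t) + 2*inner (dv 1 t) (dF 1 t) + (2*inner (dq 2 t) (dv 2 t) + 2*inner (dv 2 t) (dF 2 t))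
       + (2*inner (dq 3 t) (dv 3 t) + 2*inner (dv 3 t) (dF 3 t))\<bar>"
      unfolding E'_def by (simp add: inner_commute)
    also have "\<dots> \<le> (1 + 6*K) * (norm (dq 1 t)^2 + norm (dv 1 t)^2 + (norm (dq 2 t)^2 + norm (dv 2 t)^2) + (norm (dq 3 t)^2 + norm (dv 3 t)^2))"
      using fd[of 1] fd[of 2] fd[of 3] by (intro arith_bound[OF _ _ _ _ _ _ K cs[of "dq 1 t" "dv 1 t"] cs[of "dq 2 t" "dv 2 t"] cs[of "dq 3 t" "dv 3 t"]
        cs[of "dv 1 t" "dF 1 t"] cs[of "dv 2 t" "dF 2 t"] cs[of "dv 3 t" "dF 3 t"]]) auto
    also have "\<dots> = (1 + 6*K) * E t"
      unfolding E_def by (simp add: power2_norm_eq_inner)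
    finally show ?thesis .
  qed
  have En: "0 \<le> E t" for t unfolding E_def by (intro sum_nonneg add_nonneg_nonneg) auto
  have E0: "E t0 = 0" using init unfolding E_def dq_def dv_def by simp
  have "E T = 0" by (rule gronwall0[where E=E and E'=E' and C="1 + 6*K", OF lohi(1,2) Ed Eb En E0 lohi(3)])
  hence "inner (dq i T) (dq i T) = 0"
    unfolding E_def using i by (auto simp: add_nonneg_eq_0_iff)
  thus ?thesis by (simp add: dq_def)
qed

lemma sum3: "(\<Sum>i\<in>{1::nat,2,3}. f i) = f 1 + f 2 + f 3"
  by (simp add: add.assoc)

lemma force_inner_identity:
  fixes x1 x2 x3 f1 f2 f3 :: "real^2"
  shows "inner (gf (x2 - x1) + gf (x3 - x1)) f1 + inner (gf (x1 - x2) + gf (x3 - x2)) f2 + inner (gf (x1 - x3) + gf (x2 - x3)) f3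
    = (- inner (x1 - x2) (f1 - f2) / norm (x1 - x2) ^ 3) + (- inner (x1 - x3) (f1 - f3) / norm (x1 - x3) ^ 3)
      + (- inner (x2 - x3) (f2 - f3) / norm (x2 - x3) ^ 3)"
proof -
  have m: "gf (a - b) = - gf (b - a)" for a b :: "real^2"
    unfolding gf_def by (simp add: norm_minus_commute algebra_simps)
  have i: "inner (gf (b - a)) f = - inner (a - b) f / norm (a - b) ^ 3" for a b f :: "real^2"
    unfolding gf_def inner_scaleR_left by (simp add: norm_minus_commute inner_diff_left diff_divide_distrib)
  show ?thesis
    unfolding gf_def
    by (simp add: inner_add_left inner_diff_left inner_diff_right norm_minus_commute[of x2 x1]
      norm_minus_commute[of x3 x1] norm_minus_commute[of x3 x2] divide_inverse algebra_simps)
qed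

lemma first_variation:
  fixes q v :: motion and c :: "nat \<Rightarrow> real^2" and \<alpha> \<beta> e0 :: real
  assumes sq: "sol q v" and nq: "nocoll q" and e0: "e0 > 0"
    and mini: "\<And>\<epsilon>. \<bar>\<epsilon>\<bar> < e0 \<Longrightarrow> action q \<le> action (\<lambda>i t. q i t + \<epsilon> *\<^sub>R ((\<alpha> + \<beta> * t) *\<^sub>R c i))"
  shows "(\<Sum>i\<in>{1,2,3}. inner (v i 1) ((\<alpha> + \<beta>) *\<^sub>R c i)) = (\<Sum>i\<in>{1,2,3}. inner (v i 0) (\<alpha> *\<^sub>R c i))"
proof -
  define \<phi> where "\<phi> i t = (\<alpha> + \<beta> * t) *\<^sub>R c i" for i t
  define \<phi>' where "\<phi>' i = \<beta> *\<^sub>R c i" for i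
  define dd where "dd \<epsilon> i j t = (q i t - q j t) + \<epsilon> *\<^sub>R (\<phi> i t - \<phi> j t)" for \<epsilon> i j t
  obtain r0 where r0: "r0 > 0" "\<forall>t\<in>{0..1}. \<forall>i\<in>{1::nat,2,3}. \<forall>j\<in>{1::nat,2,3}. i \<noteq> j \<longrightarrow> r0 \<le> norm (q j t - q i t)"
    using pair_mindist[OF sq nq, of 0 1] by auto
  define N where "N = norm (c 1 - c 2) + norm (c 1 - c 3) + norm (c 2 - c 3)"
  define M where "M = (\<bar>\<alpha>\<bar> + \<bar>\<beta>\<bar>) * N"
  have M: "0 \<le> M" unfolding M_def N_def by simp
  define e1 where "e1 = min e0 (r0 / (2 * (M + 1)))"
  have e1: "0 < e1" "e1 \<le> e0" using e0 r0 M by (auto simp: e1_def)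
  have ddnz: "dd \<epsilon> i j t \<noteq> 0" if "\<bar>\<epsilon>\<bar> < e1" "t \<in> {0..1}" "(i, j) \<in> {(1,2),(1,3),(2,3)}" for \<epsilon> t i j
  proof -
    have ij: "i \<in> {1,2,3}" "j \<in> {1,2,3}" "i \<noteq> j" using that(3) by auto
    have a: "\<bar>\<alpha> + \<beta> * t\<bar> \<le> \<bar>\<alpha>\<bar> + \<bar>\<beta>\<bar>"
    proof -
      have "\<bar>\<beta> * t\<bar> \<le> \<bar>\<beta>\<bar>" using that(2) by (auto simp: abs_mult intro: mult_left_le)
      thus ?thesis by linarith
    qed
    have n: "norm (c i - c j) \<le> N" using that(3) unfolding N_def by auto
    have "norm (\<phi> i t - \<phi> j t) = \<bar>\<alpha> + \<beta> * t\<bar> * norm (c i - c j)"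
      unfolding \<phi>_def by (simp flip: scaleR_diff_right)
    also have "\<dots> \<le> M" unfolding M_def using a n by (intro mult_mono) auto
    finally have pm: "norm (\<phi> i t - \<phi> j t) \<le> M" .
    have "\<bar>\<epsilon>\<bar> * norm (\<phi> i t - \<phi> j t) \<le> \<bar>\<epsilon>\<bar> * (M + 1)" using pm by (intro mult_left_mono) auto
    also have "\<dots> < r0 / (2 * (M + 1)) * (M + 1)" using that(1) M unfolding e1_def
      by (intro mult_strict_right_mono) auto
    also have "\<dots> = r0 / 2" using M by (simp add: field_simps)
    finally have small: "norm (\<epsilon> *\<^sub>R (\<phi> i t - \<phi> j t)) < r0 / 2" by simp
    have big: "r0 \<le> norm (q i t - q j t)" using r0(2) that(2) ij by (metis norm_minus_commute)
    have "norm (q i t - q j t) \<le> norm (dd \<epsilon> i j t) + norm (\<epsilon> *\<^sub>R (\<phi> i t - \<phi> j t))"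
      unfolding dd_def by (metis add_diff_cancel norm_triangle_ineq4)
    thus ?thesis using small big r0(1) by auto
  qed
  have cq: "continuous_on S (q i)" "continuous_on S (v i)" if "i \<in> {1,2,3}" for i S
    using sol_cont[OF sq that] by auto
  have cq1: "continuous_on S (q 1)" "continuous_on S (q 2)" "continuous_on S (q 3)"
    "continuous_on S (v 1)" "continuous_on S (v 2)" "continuous_on S (v 3)" for S
    using cq by auto
  have cqs: "continuous_on S (\<lambda>z. q i (snd z))" "continuous_on S (\<lambda>z. v i (snd z))"
    if "i \<in> {1,2,3}" for i and S :: "(real \<times> real) set"
    using continuous_on_compose[OF continuous_on_snd cq(1)[OF that, of "snd ` S"]]
      continuous_on_compose[OF continuous_on_snd cq(2)[OF that, of "snd ` S"]] by (simp_all add: o_def)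
  define F where "F \<epsilon> t = (1/2) * (\<Sum>i\<in>{1::nat,2,3}. inner (v i t + \<epsilon> *\<^sub>R \<phi>' i) (v i t + \<epsilon> *\<^sub>R \<phi>' i))
      + 1 / norm (dd \<epsilon> 1 2 t) + 1 / norm (dd \<epsilon> 1 3 t) + 1 / norm (dd \<epsilon> 2 3 t)" for \<epsilon> t
  have Fnn: "0 \<le> F \<epsilon> t" for \<epsilon> t unfolding F_def by (intro add_nonneg_nonneg mult_nonneg_nonneg sum_nonneg) auto
  have ddc: "continuous_on S (\<lambda>t. dd \<epsilon> i j t)" if "i \<in> {1,2,3}" "j \<in> {1,2,3}" for \<epsilon> i j S
    unfolding dd_def \<phi>_def using cq(1)[OF that(1)] cq(1)[OF that(2)] by (intro continuous_intros)
  have invc: "continuous_on {0..1} (\<lambda>t. 1 / norm (dd \<epsilon> i j t))"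
    if e: "\<bar>\<epsilon>\<bar> < e1" and ij: "(i, j) \<in> {(1,2),(1,3),(2,3)}" for \<epsilon> i j
  proof (rule continuous_on_divide[OF continuous_on_const continuous_on_norm[OF ddc]])
    show "i \<in> {1,2,3}" "j \<in> {1,2,3}" using ij by auto
    show "\<forall>t\<in>{0..1}. norm (dd \<epsilon> i j t) \<noteq> 0" using ddnz[OF e _ ij] by simp
  qed
  have kc: "continuous_on S (\<lambda>t. (1/2) * (\<Sum>i\<in>{1::nat,2,3}. inner (v i t + \<epsilon> *\<^sub>R \<phi>' i) (v i t + \<epsilon> *\<^sub>R \<phi>' i)))" for \<epsilon> S
  proof -
    have "continuous_on S (\<lambda>t. inner (v i t + \<epsilon> *\<^sub>R \<phi>' i) (v i t + \<epsilon> *\<^sub>R \<phi>' i))" if "i \<in> {1::nat,2,3}" for i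
      using cq(2)[OF that] by (intro continuous_intros)
    thus ?thesis by (intro continuous_on_mult continuous_on_const continuous_on_sum) blast
  qed
  have Fcont: "continuous_on {0..1} (F \<epsilon>)" if "\<bar>\<epsilon>\<bar> < e1" for \<epsilon>
  proof -
    have "continuous_on {0..1} (\<lambda>t. (1/2) * (\<Sum>i\<in>{1::nat,2,3}. inner (v i t + \<epsilon> *\<^sub>R \<phi>' i) (v i t + \<epsilon> *\<^sub>R \<phi>' i))
      + 1 / norm (dd \<epsilon> 1 2 t) + 1 / norm (dd \<epsilon> 1 3 t) + 1 / norm (dd \<epsilon> 2 3 t))"
      by (intro continuous_on_add kc invc[OF that]) auto
    thus ?thesis unfolding F_def[abs_def] .
  qed
  have act: "action (\<lambda>i t. q i t + \<epsilon> *\<^sub>R \<phi> i t) = ennreal (integral {0..1} (F \<epsilon>))"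
    if e: "\<bar>\<epsilon>\<bar> < e1" for \<epsilon>
  proof -
    have vd: "vector_derivative (\<lambda>t. q i t + \<epsilon> *\<^sub>R \<phi> i t) (at t) = v i t + \<epsilon> *\<^sub>R \<phi>' i"
      if "i \<in> {1,2,3}" for i t
    proof (rule vector_derivative_at)
      show "((\<lambda>t. q i t + \<epsilon> *\<^sub>R \<phi> i t) has_vector_derivative v i t + \<epsilon> *\<^sub>R \<phi>' i) (at t)"
        using sq that unfolding sol_def \<phi>_def \<phi>'_def
        by (auto intro!: derivative_eq_intros simp: algebra_simps)
    qed
    have pp: "pairpot (q i t + \<epsilon> *\<^sub>R \<phi> i t) (q j t + \<epsilon> *\<^sub>R \<phi> j t) = ennreal (1 / norm (dd \<epsilon> i j t))"
      if "t \<in> {0..1}" "(i, j) \<in> {(1,2),(1,3),(2,3)}" for i j t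
    proof -
      have "q i t + \<epsilon> *\<^sub>R \<phi> i t - (q j t + \<epsilon> *\<^sub>R \<phi> j t) = dd \<epsilon> i j t"
        unfolding dd_def by (simp add: algebra_simps)
      thus ?thesis using ddnz[OF e that] unfolding pairpot_def by auto
    qed
    have pt: "ennreal ((1/2) * (\<Sum>i\<in>{1,2,3}. (norm (vector_derivative (\<lambda>t. q i t + \<epsilon> *\<^sub>R \<phi> i t) (at t)))^2))
      + pairpot (q 1 t + \<epsilon> *\<^sub>R \<phi> 1 t) (q 2 t + \<epsilon> *\<^sub>R \<phi> 2 t) + pairpot (q 1 t + \<epsilon> *\<^sub>R \<phi> 1 t) (q 3 t + \<epsilon> *\<^sub>R \<phi> 3 t)
      + pairpot (q 2 t + \<epsilon> *\<^sub>R \<phi> 2 t) (q 3 t + \<epsilon> *\<^sub>R \<phi> 3 t) = ennreal (F \<epsilon> t)" if t: "t \<in> {0..1}" for t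
    proof -
      have s: "(\<Sum>i\<in>{1::nat,2,3}. (norm (vector_derivative (\<lambda>t. q i t + \<epsilon> *\<^sub>R \<phi> i t) (at t)))^2)
          = (\<Sum>i\<in>{1::nat,2,3}. inner (v i t + \<epsilon> *\<^sub>R \<phi>' i) (v i t + \<epsilon> *\<^sub>R \<phi>' i))"
        by (rule sum.cong) (auto simp: vd power2_norm_eq_inner)
      have p12: "pairpot (q 1 t + \<epsilon> *\<^sub>R \<phi> 1 t) (q 2 t + \<epsilon> *\<^sub>R \<phi> 2 t) = ennreal (1 / norm (dd \<epsilon> 1 2 t))"
        by (rule pp[OF t]) simp
      have p13: "pairpot (q 1 t + \<epsilon> *\<^sub>R \<phi> 1 t) (q 3 t + \<epsilon> *\<^sub>R \<phi> 3 t) = ennreal (1 / norm (dd \<epsilon> 1 3 t))"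
        by (rule pp[OF t]) simp
      have p23: "pairpot (q 2 t + \<epsilon> *\<^sub>R \<phi> 2 t) (q 3 t + \<epsilon> *\<^sub>R \<phi> 3 t) = ennreal (1 / norm (dd \<epsilon> 2 3 t))"
        by (rule pp[OF t]) simp
      have nn: "0 \<le> (1/2) * (\<Sum>i\<in>{1::nat,2,3}. inner (v i t + \<epsilon> *\<^sub>R \<phi>' i) (v i t + \<epsilon> *\<^sub>R \<phi>' i))"
        by (intro mult_nonneg_nonneg sum_nonneg) auto
      show ?thesis unfolding s p12 p13 p23 F_def
        using nn by (simp only: ennreal_plus[symmetric] add_nonneg_nonneg norm_ge_zero divide_nonneg_nonneg zero_le_one)
    qed
    have "action (\<lambda>i t. q i t + \<epsilon> *\<^sub>R \<phi> i t) = (\<integral>\<^sup>+ t. ennreal (F \<epsilon> t) * indicator {0..1} t \<partial>lborel)"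
      unfolding action_def
      apply (rule nn_integral_cong)
      subgoal for t
      proof (cases "t \<in> {0..1}")
        case True
        show ?thesis by (simp only: pt[OF True])
      next
        case False
        thus ?thesis by simp
      qed
      done
    also have "\<dots> = ennreal (integral {0..1} (F \<epsilon>))"
      by (rule nn_integral_has_integral_lebesgue'[OF Fnn integrable_integral[OF integrable_continuous_interval[OF Fcont[OF e]]]])
    finally show ?thesis .
  qed
  define fx where "fx \<epsilon> t = (\<Sum>i\<in>{1::nat,2,3}. inner (v i t + \<epsilon> *\<^sub>R \<phi>' i) (\<phi>' i))
     + (- inner (dd \<epsilon> 1 2 t) (\<phi> 1 t - \<phi> 2 t) / norm (dd \<epsilon> 1 2 t) ^ 3)
     + (- inner (dd \<epsilon> 1 3 t) (\<phi> 1 t - \<phi> 3 t) / norm (dd \<epsilon> 1 3 t) ^ 3)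
     + (- inner (dd \<epsilon> 2 3 t) (\<phi> 2 t - \<phi> 3 t) / norm (dd \<epsilon> 2 3 t) ^ 3)" for \<epsilon> t
  have Fd: "((\<lambda>\<epsilon>. F \<epsilon> t) has_real_derivative fx \<epsilon> t) (at \<epsilon> within U)"
    if e: "\<bar>\<epsilon>\<bar> < e1" and t: "t \<in> {0..1}" for \<epsilon> t U
  proof -
    have each: "((\<lambda>\<epsilon>. inner (v i t + \<epsilon> *\<^sub>R \<phi>' i) (v i t + \<epsilon> *\<^sub>R \<phi>' i)) has_real_derivative
        (inner (\<phi>' i) (v i t + \<epsilon> *\<^sub>R \<phi>' i) + inner (v i t + \<epsilon> *\<^sub>R \<phi>' i) (\<phi>' i))) (at \<epsilon> within U)" for i
      by (rule has_real_derivative_inner) (auto intro!: derivative_eq_intros)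
    have dK: "((\<lambda>\<epsilon>. (1/2) * (\<Sum>i\<in>{1::nat,2,3}. inner (v i t + \<epsilon> *\<^sub>R \<phi>' i) (v i t + \<epsilon> *\<^sub>R \<phi>' i))) has_real_derivative
        (\<Sum>i\<in>{1::nat,2,3}. inner (v i t + \<epsilon> *\<^sub>R \<phi>' i) (\<phi>' i))) (at \<epsilon> within U)"
      by (rule DERIV_cong[OF DERIV_cmult[OF DERIV_sum[OF each]]]) (simp add: inner_commute)
    have dP: "((\<lambda>\<epsilon>. 1 / norm (dd \<epsilon> i j t)) has_real_derivative
        (- inner (dd \<epsilon> i j t) (\<phi> i t - \<phi> j t) / norm (dd \<epsilon> i j t) ^ 3)) (at \<epsilon> within U)"
      if "(i, j) \<in> {(1,2),(1,3),(2,3)}" for i j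
      unfolding dd_def by (rule deriv_inv_norm) (use ddnz[OF e t that] in \<open>simp add: dd_def\<close>)
    show ?thesis
      unfolding F_def[abs_def] fx_def
      by (intro DERIV_add dK dP) auto
  qed
  have inU: "\<bar>\<epsilon>\<bar> < e1" if "\<epsilon> \<in> ball 0 e1" for \<epsilon> using that by (simp add: dist_real_def)
  have fxcont: "continuous_on (ball 0 e1 \<times> cbox 0 1) (\<lambda>(\<epsilon>, t). fx \<epsilon> t)"
    unfolding split_beta' fx_def dd_def \<phi>_def \<phi>'_def
    using ddnz[OF inU] unfolding dd_def \<phi>_def
    by (intro continuous_intros cqs) (auto simp: mem_Times_iff)
  have "((\<lambda>\<epsilon>. integral (cbox 0 1) (F \<epsilon>)) has_field_derivative integral (cbox 0 1) (fx 0)) (at 0 within ball 0 e1)"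
  proof (rule leibniz_rule_field_derivative[OF _ _ fxcont])
    show "((\<lambda>\<epsilon>. F \<epsilon> t) has_field_derivative fx \<epsilon> t) (at \<epsilon> within ball 0 e1)"
      if "\<epsilon> \<in> ball 0 e1" "t \<in> cbox 0 1" for \<epsilon> t
      using Fd[OF inU[OF that(1)]] that(2) by simp
    show "F \<epsilon> integrable_on cbox 0 1" if "\<epsilon> \<in> ball 0 e1" for \<epsilon>
      using integrable_continuous_interval[OF Fcont[OF inU[OF that]]] by simp
  qed (use e1 in auto)
  moreover have "at (0::real) within ball 0 e1 = at 0" by (rule at_within_open) (use e1 in auto)
  ultimately have Gd: "((\<lambda>\<epsilon>. integral {0..1} (F \<epsilon>)) has_real_derivative integral {0..1} (fx 0)) (at 0)"
    by (simp add: cbox_interval)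
  have "integral {0..1} (fx 0) = 0"
  proof (rule DERIV_local_min[OF Gd e1(1)], intro allI impI)
    fix y :: real assume y: "\<bar>0 - y\<bar> < e1"
    have eq0: "(\<lambda>i t. q i t + 0 *\<^sub>R \<phi> i t) = q" by simp
    have "ennreal (integral {0..1} (F 0)) = action q" using act[of 0] e1 by (simp only: eq0)
    also have "\<dots> \<le> action (\<lambda>i t. q i t + y *\<^sub>R ((\<alpha> + \<beta> * t) *\<^sub>R c i))" using mini y e1 by simp
    also have "(\<lambda>i t. q i t + y *\<^sub>R ((\<alpha> + \<beta> * t) *\<^sub>R c i)) = (\<lambda>i t. q i t + y *\<^sub>R \<phi> i t)"
      by (simp add: \<phi>_def)
    also have "action \<dots> = ennreal (integral {0..1} (F y))" using act[of y] y by simp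
    finally show "integral {0..1} (F 0) \<le> integral {0..1} (F y)"
      using integral_nonneg[OF integrable_continuous_interval[OF Fcont] Fnn, of y] y
      by (simp add: ennreal_le_iff)
  qed
  define H where "H t = (\<Sum>i\<in>{1::nat,2,3}. inner (v i t) (\<phi> i t))" for t
  have Hd: "(H has_real_derivative fx 0 t) (at t)" for t
  proof -
    have each: "((\<lambda>t. inner (v i t) (\<phi> i t)) has_real_derivative inner (force q i t) (\<phi> i t) + inner (v i t) (\<phi>' i)) (at t)"
      if "i \<in> {1,2,3}" for i
      using sq that unfolding sol_def \<phi>_def \<phi>'_def
      by (intro has_real_derivative_inner) (auto intro!: derivative_eq_intros)
    have "(H has_real_derivative (\<Sum>i\<in>{1::nat,2,3}. inner (force q i t) (\<phi> i t) + inner (v i t) (\<phi>' i))) (at t)"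
      unfolding H_def[abs_def] by (rule DERIV_sum) (rule each)
    moreover have "(\<Sum>i\<in>{1::nat,2,3}. inner (force q i t) (\<phi> i t) + inner (v i t) (\<phi>' i)) = fx 0 t"
    proof -
      have fx0: "fx 0 t = (\<Sum>i\<in>{1::nat,2,3}. inner (v i t) (\<phi>' i))
         + (- inner (q 1 t - q 2 t) (\<phi> 1 t - \<phi> 2 t) / norm (q 1 t - q 2 t) ^ 3)
         + (- inner (q 1 t - q 3 t) (\<phi> 1 t - \<phi> 3 t) / norm (q 1 t - q 3 t) ^ 3)
         + (- inner (q 2 t - q 3 t) (\<phi> 2 t - \<phi> 3 t) / norm (q 2 t - q 3 t) ^ 3)"
        unfolding fx_def dd_def by (simp only: scaleR_zero_left add_0_right)
      have lhs: "(\<Sum>i\<in>{1::nat,2,3}. inner (force q i t) (\<phi> i t) + inner (v i t) (\<phi>' i))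
         = (inner (force q 1 t) (\<phi> 1 t) + inner (force q 2 t) (\<phi> 2 t) + inner (force q 3 t) (\<phi> 3 t))
           + (\<Sum>i\<in>{1::nat,2,3}. inner (v i t) (\<phi>' i))"
        by (simp only: sum.distrib sum3)
      have idt: "inner (force q 1 t) (\<phi> 1 t) + inner (force q 2 t) (\<phi> 2 t) + inner (force q 3 t) (\<phi> 3 t)
         = (- inner (q 1 t - q 2 t) (\<phi> 1 t - \<phi> 2 t) / norm (q 1 t - q 2 t) ^ 3)
         + (- inner (q 1 t - q 3 t) (\<phi> 1 t - \<phi> 3 t) / norm (q 1 t - q 3 t) ^ 3)
         + (- inner (q 2 t - q 3 t) (\<phi> 2 t - \<phi> 3 t) / norm (q 2 t - q 3 t) ^ 3)"
        unfolding force_expand by (rule force_inner_identity)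
      show ?thesis using fx0 lhs idt by linarith
    qed
    ultimately show ?thesis by simp
  qed
  have "(fx 0 has_integral (H 1 - H 0)) {0..1}"
  proof (rule fundamental_theorem_of_calculus)
    show "(0::real) \<le> 1" by simp
    fix x :: real assume "x \<in> {0..1}"
    have "(H has_real_derivative fx 0 x) (at x within {0..1})" by (rule has_field_derivative_at_within[OF Hd])
    thus "(H has_vector_derivative fx 0 x) (at x within {0..1})"
      by (simp only: has_real_derivative_iff_has_vector_derivative)
  qed
  hence "H 1 - H 0 = 0" using \<open>integral {0..1} (fx 0) = 0\<close> by (simp add: integral_unique)
  thus ?thesis unfolding H_def \<phi>_def by simp
qed

lemma H1_C1:
  assumes d: "\<And>t. (f has_vector_derivative f' t) (at t)" and c: "continuous_on UNIV f'"
  shows "H1_01 f"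
  unfolding H1_01_def
proof (intro exI conjI ballI)
  show "f' \<in> borel_measurable lborel"
    unfolding measurable_lborel2 by (rule borel_measurable_continuous_onI[OF c])
  show "set_integrable lborel {0..1} (\<lambda>t. (norm (f' t))^2)"
    unfolding set_integrable_def
    by (rule borel_integrable_compact) (auto intro!: continuous_intros continuous_on_subset[OF c])
  fix t :: real assume t: "t \<in> {0..1}"
  have si: "set_integrable lborel {0..t} f'"
    unfolding set_integrable_def
    by (rule borel_integrable_compact) (auto intro!: continuous_on_subset[OF c])
  have "(f' has_integral (f t - f 0)) {0..t}"
    using t by (intro fundamental_theorem_of_calculus) (auto intro: has_vector_derivative_at_within d)
  hence "(LINT s:{0..t}|lborel. f' s) = f t - f 0"
    using set_borel_integral_eq_integral(2)[OF si] by (simp add: integral_unique)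
  thus "f t = f 0 + (LINT s:{0..t}|lborel. f' s)" by simp
qed

lemma vec2_eq: "(x::real^2) = y \<longleftrightarrow> x$1 = y$1 \<and> x$2 = y$2"
  by (simp add: vec_eq_iff forall_2)

lemma inner2: "inner (x::real^2) y = x$1 * y$1 + x$2 * y$2"
  by (simp add: inner_vec_def sum_2)

lemma Qs1_lin: "Qs1 (a1 + e * d1) (a2 + e * d2) i = Qs1 a1 a2 i + e *\<^sub>R Qs1 d1 d2 i"
  by (simp add: Qs1_def vec2_eq algebra_simps)

lemma Qe1_lin: "Qe1 (a1 + e * d1) (a2 + e * d2) i = Qe1 a1 a2 i + e *\<^sub>R Qe1 d1 d2 i"
  by (simp add: Qe1_def vec2_eq algebra_simps)

lemma var_adm:
  assumes sq: "sol q v" and sum0: "\<forall>t\<in>{0..1}. q 1 t + q 2 t + q 3 t = 0"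
    and csum: "c 1 + c 2 + c 3 = 0" and A: "A1 \<ge> 0" "A2 \<ge> 0"
    and st: "\<And>i. i \<in> {1,2,3} \<Longrightarrow> q i 0 + (\<epsilon> * \<alpha>) *\<^sub>R c i = Qs1 A1 A2 i"
    and en: "\<And>i. i \<in> {1,2,3} \<Longrightarrow> q i 1 + (\<epsilon> * (\<alpha> + \<beta>)) *\<^sub>R c i = Qe1 B1 B2 i"
  shows "admissible (\<lambda>i t. q i t + \<epsilon> *\<^sub>R ((\<alpha> + \<beta> * t) *\<^sub>R c i))"
proof -
  have H: "H1_01 (\<lambda>t. q i t + \<epsilon> *\<^sub>R ((\<alpha> + \<beta> * t) *\<^sub>R c i))" if i: "i \<in> {1,2,3}" for i
  proof (rule H1_C1)
    show "((\<lambda>t. q i t + \<epsilon> *\<^sub>R ((\<alpha> + \<beta> * t) *\<^sub>R c i)) has_vector_derivative (v i t + \<epsilon> *\<^sub>R (\<beta> *\<^sub>R c i))) (at t)" for t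
      using sq i unfolding sol_def by (auto intro!: derivative_eq_intros simp: algebra_simps)
    show "continuous_on UNIV (\<lambda>t. v i t + \<epsilon> *\<^sub>R (\<beta> *\<^sub>R c i))"
      using sol_cont[OF sq i] by (intro continuous_intros) auto
  qed
  have S: "q 1 t + \<epsilon> *\<^sub>R ((\<alpha> + \<beta> * t) *\<^sub>R c 1) + (q 2 t + \<epsilon> *\<^sub>R ((\<alpha> + \<beta> * t) *\<^sub>R c 2)) + (q 3 t + \<epsilon> *\<^sub>R ((\<alpha> + \<beta> * t) *\<^sub>R c 3)) = 0"
    if t: "t \<in> {0..1}" for t
  proof -
    have qs: "q 1 t + q 2 t + q 3 t = 0" using sum0 t by blast
    have "q 1 t + \<epsilon> *\<^sub>R ((\<alpha> + \<beta> * t) *\<^sub>R c 1) + (q 2 t + \<epsilon> *\<^sub>R ((\<alpha> + \<beta> * t) *\<^sub>R c 2)) + (q 3 t + \<epsilon> *\<^sub>R ((\<alpha> + \<beta> * t) *\<^sub>R c 3))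
       = (q 1 t + q 2 t + q 3 t) + (\<epsilon> * (\<alpha> + \<beta> * t)) *\<^sub>R (c 1 + c 2 + c 3)"
      by (simp add: algebra_simps)
    also have "\<dots> = 0" by (simp only: qs csum scaleR_zero_right add_0)
    finally show ?thesis .
  qed
  have B: "q i 0 + \<epsilon> *\<^sub>R ((\<alpha> + \<beta> * 0) *\<^sub>R c i) = Qs1 A1 A2 i \<and> q i 1 + \<epsilon> *\<^sub>R ((\<alpha> + \<beta> * 1) *\<^sub>R c i) = Qe1 B1 B2 i"
    if i: "i \<in> {1,2,3}" for i using st[OF i] en[OF i] by simp
  show ?thesis unfolding admissible_def
    using H S B A by blast
qed

lemma gf_neg: "gf (a - b) = - gf (b - a)"
  unfolding gf_def by (simp add: norm_minus_commute algebra_simps)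

lemma sum_v_zero:
  assumes sq: "sol q v" and sum0: "\<forall>t\<in>{0..1}. q 1 t + q 2 t + q 3 t = 0"
  shows "v 1 t + v 2 t + v 3 t = 0"
proof -
  have fs: "force q 1 s + force q 2 s + force q 3 s = 0" for s
    unfolding force_expand using gf_neg[of "q 1 s" "q 2 s"] gf_neg[of "q 1 s" "q 3 s"] gf_neg[of "q 2 s" "q 3 s"]
    by (simp add: algebra_simps)
  have "((\<lambda>s. v 1 s + v 2 s + v 3 s) has_vector_derivative 0) (at x)" for x
    using sq fs[of x] unfolding sol_def by (auto intro!: derivative_eq_intros)
  then obtain c where c: "\<And>x. v 1 x + v 2 x + v 3 x = c"
    using has_derivative_zero_constant[of UNIV "\<lambda>s. v 1 s + v 2 s + v 3 s"]
    by (auto simp: has_vector_derivative_def)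
  have "((\<lambda>s. q 1 s + q 2 s + q 3 s - s *\<^sub>R c) has_vector_derivative 0) (at x)" for x
    using sq c[of x] unfolding sol_def by (auto intro!: derivative_eq_intros)
  then obtain d where d: "\<And>x. q 1 x + q 2 x + q 3 x - x *\<^sub>R c = d"
    using has_derivative_zero_constant[of UNIV "\<lambda>s. q 1 s + q 2 s + q 3 s - s *\<^sub>R c"]
    by (auto simp: has_vector_derivative_def)
  have "c = 0" using d[of 0] d[of 1] sum0 by auto
  thus ?thesis using c by simp
qed

lemma mv_deriv:
  fixes M :: "real^2^2"
  assumes "(f has_vector_derivative f') (at t)"
  shows "((\<lambda>t. M *v f t) has_vector_derivative M *v f') (at t)"
proof -
  have bl: "bounded_linear ((*v) M)" by (simp add: linear_conv_bounded_linear)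
  from bounded_linear.has_derivative[OF bl assms[unfolded has_vector_derivative_def]]
  show ?thesis unfolding has_vector_derivative_def by (simp add: matrix_vector_mult_scaleR)
qed

lemma rev_deriv:
  assumes "(f has_vector_derivative f') (at (a - t))"
  shows "((\<lambda>t. f (a - t)) has_vector_derivative - f') (at t)"
proof -
  have "((\<lambda>t. a - t) has_vector_derivative -1) (at t)" by (auto intro!: derivative_eq_intros)
  from vector_diff_chain_at[OF this, of f f'] assms show ?thesis by (simp add: o_def)
qed

lemma mv_neg: "(M::real^2^2) *v (- x) = - (M *v x)"
  by (simp add: vec_eq_iff matrix_vector_mult_def sum_negf)

lemma mv_sum: "(M::real^2^2) *v (\<Sum>j\<in>A. f j) = (\<Sum>j\<in>A. M *v f j)"
  by (induct A rule: infinite_finite_induct) (simp_all add: matrix_vector_right_distrib)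

lemma sol_transform:
  fixes M :: "real^2^2" and \<sigma> :: "nat \<Rightarrow> nat"
  assumes sq: "sol q v" and np: "\<And>x. norm (M *v x) = norm x"
    and inj: "inj_on \<sigma> {1,2,3}" and im: "\<sigma> ` {1,2,3} = {1,2,3}"
  shows "sol (\<lambda>i t. M *v q (\<sigma> i) (a - t)) (\<lambda>i t. - (M *v v (\<sigma> i) (a - t)))"
  unfolding sol_def
proof (intro ballI allI conjI)
  fix i t assume i: "i \<in> {1::nat,2,3}"
  have si: "\<sigma> i \<in> {1,2,3}" using im i by auto
  have d1: "(q (\<sigma> i) has_vector_derivative v (\<sigma> i) (a - t)) (at (a - t))"
   and d2: "(v (\<sigma> i) has_vector_derivative force q (\<sigma> i) (a - t)) (at (a - t))"
    using sq si unfolding sol_def by auto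
  show "((\<lambda>t. M *v q (\<sigma> i) (a - t)) has_vector_derivative - (M *v v (\<sigma> i) (a - t))) (at t)"
    using mv_deriv[OF rev_deriv[OF d1]] by (simp add: mv_neg)
  let ?s = "a - t"
  define h where "h k = (1 / norm (q k ?s - q (\<sigma> i) ?s) ^ 3) *\<^sub>R (q k ?s - q (\<sigma> i) ?s)" for k
  have "force (\<lambda>i t. M *v q (\<sigma> i) (a - t)) i t = (\<Sum>j\<in>{1,2,3} - {i}. M *v h (\<sigma> j))"
    unfolding force_def h_def
    by (rule sum.cong) (simp_all add: matrix_vector_mult_diff_distrib[symmetric] np matrix_vector_mult_scaleR)
  also have "\<dots> = M *v (\<Sum>j\<in>{1,2,3} - {i}. h (\<sigma> j))" by (simp add: mv_sum)
  also have "(\<Sum>j\<in>{1,2,3} - {i}. h (\<sigma> j)) = (\<Sum>k\<in>\<sigma> ` ({1,2,3} - {i}). h k)"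
    by (rule sum.reindex[symmetric, unfolded o_def]) (rule inj_on_subset[OF inj], auto)
  also have "\<sigma> ` ({1,2,3} - {i}) = {1,2,3} - {\<sigma> i}"
    using inj_on_image_set_diff[OF inj, of "{1,2,3}" "{i}"] i im by auto
  also have "(\<Sum>k\<in>{1,2,3} - {\<sigma> i}. h k) = force q (\<sigma> i) ?s" unfolding force_def h_def ..
  finally have fe: "force (\<lambda>i t. M *v q (\<sigma> i) (a - t)) i t = M *v force q (\<sigma> i) (a - t)" .
  show "((\<lambda>t. - (M *v v (\<sigma> i) (a - t))) has_vector_derivative force (\<lambda>i t. M *v q (\<sigma> i) (a - t)) i t) (at t)"
    unfolding fe using has_vector_derivative_minus[OF mv_deriv[OF rev_deriv[OF d2]], of M] by (simp add: mv_neg)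
qed

lemma nocoll_transform:
  fixes M :: "real^2^2" and \<sigma> :: "nat \<Rightarrow> nat"
  assumes nq: "nocoll q" and np: "\<And>x. norm (M *v x) = norm x"
    and inj: "inj_on \<sigma> {1,2,3}" and im: "\<sigma> ` {1,2,3} = {1,2,3}"
  shows "nocoll (\<lambda>i t. M *v q (\<sigma> i) (a - t))"
  unfolding nocoll_def
proof (intro allI impI)
  fix t and i j :: nat assume ij: "i \<in> {1,2,3}" "j \<in> {1,2,3}" "i \<noteq> j"
  have s: "\<sigma> i \<in> {1,2,3}" "\<sigma> j \<in> {1,2,3}" "\<sigma> i \<noteq> \<sigma> j" using ij im inj by (auto dest: inj_onD)
  show "M *v q (\<sigma> i) (a - t) \<noteq> M *v q (\<sigma> j) (a - t)"
  proof
    assume "M *v q (\<sigma> i) (a - t) = M *v q (\<sigma> j) (a - t)"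
    hence "norm (M *v (q (\<sigma> i) (a - t) - q (\<sigma> j) (a - t))) = 0" by (simp add: matrix_vector_mult_diff_distrib)
    hence "q (\<sigma> i) (a - t) = q (\<sigma> j) (a - t)" by (simp add: np)
    thus False using nq s unfolding nocoll_def by blast
  qed
qed

lemma Rx_mv: "Rx *v x = vector [x$1, - x$2]"
  by (simp add: vec2_eq Rx_def matrix_vector_mult_def sum_2)

lemma Ry_mv: "Ry *v x = vector [- x$1, x$2]"
  by (simp add: vec2_eq Ry_def matrix_vector_mult_def sum_2)

lemma Rx_norm: "norm (Rx *v x) = norm x"
  by (simp add: norm_eq_sqrt_inner inner2 Rx_mv)

lemma Ry_norm: "norm (Ry *v x) = norm x"
  by (simp add: norm_eq_sqrt_inner inner2 Ry_mv)

lemma RxRy: "(Rx ** Ry) *v x = - x"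
  by (simp add: matrix_vector_mul_assoc[symmetric] Rx_mv Ry_mv vec2_eq)

theorem lemma6p3:
  fixes q :: motion
  assumes minimizer: "admissible q" "\<And>p. admissible p \<Longrightarrow> action q \<le> action p"
    and collision_free_01: "\<And>t i j. t \<in> {0..1} \<Longrightarrow> i \<in> {1,2,3} \<Longrightarrow> j \<in> {1,2,3} \<Longrightarrow> i \<noteq> j
          \<Longrightarrow> q i t \<noteq> q j t"
    and no_collision: "\<And>t i j. i \<in> {1,2,3} \<Longrightarrow> j \<in> {1,2,3} \<Longrightarrow> i \<noteq> j \<Longrightarrow> q i t \<noteq> q j t"
    and newton: "\<exists>v. \<forall>i\<in>{1,2,3}. \<forall>t.
          (q i has_vector_derivative v i t) (at t) \<and>
          (v i has_vector_derivative
             (\<Sum>j\<in>{1,2,3} - {i}. (1 / norm (q j t - q i t) ^ 3) *\<^sub>R (q j t - q i t))) (at t)"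
  shows "\<forall>t. (\<forall>i\<in>{1,2,3}. q i t = Rx *v q i (-t)) \<and>
             q 1 (t + 2) = (Rx ** Ry) *v q 1 t \<and>
             q 2 (t + 2) = (Rx ** Ry) *v q 3 t \<and>
             q 3 (t + 2) = (Rx ** Ry) *v q 2 t"
proof -
  obtain v where sq: "sol q v" using newton unfolding sol_def force_def by blast
  have nq: "nocoll q" using no_collision unfolding nocoll_def by blast
  from minimizer(1) obtain a1 a2 b1 b2 where
    sum0: "\<forall>t\<in>{0..1}. q 1 t + q 2 t + q 3 t = 0" and a: "a1 \<ge> 0" "a2 \<ge> 0"
    and bd: "\<forall>i\<in>{1,2,3}. q i 0 = Qs1 a1 a2 i \<and> q i 1 = Qe1 b1 b2 i"
    unfolding admissible_def by blast
  have q0: "q 1 0 = vector [-2*a1 - a2, 0]" "q 2 0 = vector [a1 - a2, 0]" "q 3 0 = vector [a1 + 2*a2, 0]"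
    using bd by (auto simp: Qs1_def)
  have q1: "q 1 1 = vector [0, -2*b1]" "q 2 1 = vector [-b2, b1]" "q 3 1 = vector [b2, b1]"
    using bd by (auto simp: Qe1_def)
  have "a1 \<noteq> 0" using collision_free_01[of 0 1 2] q0 by (auto simp: vec2_eq)
  hence a1: "a1 > 0" using a by simp
  have "a2 \<noteq> 0" using collision_free_01[of 0 2 3] q0 by (auto simp: vec2_eq)
  hence a2: "a2 > 0" using a by simp
  have sv: "v 1 t + v 2 t + v 3 t = 0" for t by (rule sum_v_zero[OF sq sum0])
  have sv1: "v 1 t $ 1 + v 2 t $ 1 + v 3 t $ 1 = 0" "v 1 t $ 2 + v 2 t $ 2 + v 3 t $ 2 = 0" for t
    using arg_cong[OF sv[of t], of "\<lambda>x. x $ 1"] arg_cong[OF sv[of t], of "\<lambda>x. x $ 2"] by auto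
  have startvar: "(\<Sum>i\<in>{1,2,3}. inner (v i 0) (Qs1 d1 d2 i)) = 0"
    if d: "\<bar>d1\<bar> \<le> 1" "\<bar>d2\<bar> \<le> 1" for d1 d2
  proof -
    have "(\<Sum>i\<in>{1,2,3}. inner (v i 1) ((1 + -1) *\<^sub>R Qs1 d1 d2 i)) = (\<Sum>i\<in>{1,2,3}. inner (v i 0) (1 *\<^sub>R Qs1 d1 d2 i))"
    proof (rule first_variation[OF sq nq, of "min a1 a2"])
      show "0 < min a1 a2" using a1 a2 by simp
      fix \<epsilon> :: real assume e: "\<bar>\<epsilon>\<bar> < min a1 a2"
      have "\<bar>\<epsilon> * d1\<bar> \<le> \<bar>\<epsilon>\<bar>" "\<bar>\<epsilon> * d2\<bar> \<le> \<bar>\<epsilon>\<bar>" using d by (auto simp: abs_mult intro: mult_left_le)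
      hence A: "a1 + \<epsilon> * d1 \<ge> 0" "a2 + \<epsilon> * d2 \<ge> 0" using e by auto
      have "admissible (\<lambda>i t. q i t + \<epsilon> *\<^sub>R ((1 + -1 * t) *\<^sub>R Qs1 d1 d2 i))"
      proof (rule var_adm[OF sq sum0 _ A])
        show "Qs1 d1 d2 1 + Qs1 d1 d2 2 + Qs1 d1 d2 3 = 0" by (simp add: Qs1_def vec2_eq)
        show "q i 0 + (\<epsilon> * 1) *\<^sub>R Qs1 d1 d2 i = Qs1 (a1 + \<epsilon> * d1) (a2 + \<epsilon> * d2) i" if "i \<in> {1,2,3}" for i
          using bd that by (auto simp: Qs1_lin)
        show "q i 1 + (\<epsilon> * (1 + -1)) *\<^sub>R Qs1 d1 d2 i = Qe1 b1 b2 i" if "i \<in> {1,2,3}" for i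
          using bd that by auto
      qed
      thus "action q \<le> action (\<lambda>i t. q i t + \<epsilon> *\<^sub>R ((1 + -1 * t) *\<^sub>R Qs1 d1 d2 i))" by (rule minimizer(2))
    qed
    thus ?thesis by simp
  qed
  have e1: "-2 * v 1 0 $ 1 + v 2 0 $ 1 + v 3 0 $ 1 = 0" using startvar[of 1 0] by (simp add: Qs1_def inner2)
  have e2: "- v 1 0 $ 1 - v 2 0 $ 1 + 2 * v 3 0 $ 1 = 0" using startvar[of 0 1] by (simp add: Qs1_def inner2)
  have vx0: "v 1 0 $ 1 = 0" "v 2 0 $ 1 = 0" "v 3 0 $ 1 = 0" using e1 e2 sv1(1)[of 0] by linarith+
  have endvar: "(\<Sum>i\<in>{1,2,3}. inner (v i 1) (Qe1 d1 d2 i)) = 0" for d1 d2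
  proof -
    have "(\<Sum>i\<in>{1,2,3}. inner (v i 1) ((0 + 1) *\<^sub>R Qe1 d1 d2 i)) = (\<Sum>i\<in>{1,2,3}. inner (v i 0) (0 *\<^sub>R Qe1 d1 d2 i))"
    proof (rule first_variation[OF sq nq, of 1])
      show "(0::real) < 1" by simp
      fix \<epsilon> :: real assume e: "\<bar>\<epsilon>\<bar> < 1"
      have "admissible (\<lambda>i t. q i t + \<epsilon> *\<^sub>R ((0 + 1 * t) *\<^sub>R Qe1 d1 d2 i))"
      proof (rule var_adm[OF sq sum0 _ a])
        show "Qe1 d1 d2 1 + Qe1 d1 d2 2 + Qe1 d1 d2 3 = 0" by (simp add: Qe1_def vec2_eq)
        show "q i 0 + (\<epsilon> * 0) *\<^sub>R Qe1 d1 d2 i = Qs1 a1 a2 i" if "i \<in> {1,2,3}" for i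
          using bd that by auto
        show "q i 1 + (\<epsilon> * (0 + 1)) *\<^sub>R Qe1 d1 d2 i = Qe1 (b1 + \<epsilon> * d1) (b2 + \<epsilon> * d2) i" if "i \<in> {1,2,3}" for i
          using bd that by (auto simp: Qe1_lin)
      qed
      thus "action q \<le> action (\<lambda>i t. q i t + \<epsilon> *\<^sub>R ((0 + 1 * t) *\<^sub>R Qe1 d1 d2 i))" by (rule minimizer(2))
    qed
    thus ?thesis by simp
  qed
  have f1: "-2 * v 1 1 $ 2 + v 2 1 $ 2 + v 3 1 $ 2 = 0" using endvar[of 1 0] by (simp add: Qe1_def inner2)
  have f2: "- v 2 1 $ 1 + v 3 1 $ 1 = 0" using endvar[of 0 1] by (simp add: Qe1_def inner2)
  have vy1: "v 1 1 $ 2 = 0" "v 3 1 $ 2 = - v 2 1 $ 2" using f1 sv1(2)[of 1] by linarith+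
  have idinj: "inj_on (\<lambda>i::nat. i) {1,2,3}" and idim: "(\<lambda>i::nat. i) ` {1,2,3} = {1,2,3}" by auto
  have sym1: "q i T = Rx *v q i (0 - T)" if i: "i \<in> {1,2,3}" for i T
  proof (rule uniqueness[OF sq sol_transform[OF sq Rx_norm idinj idim] nq nocoll_transform[OF nq Rx_norm idinj idim] _ i, of 0 0])
    show "\<forall>i\<in>{1,2,3}. q i 0 = Rx *v q i (0 - 0) \<and> v i 0 = - (Rx *v v i (0 - 0))"
      using q0 vx0 by (auto simp: Rx_mv vec2_eq)
  qed
  define \<sigma> where "\<sigma> i = (if i = 2 then 3 else if i = 3 then 2 else i)" for i :: nat
  have sinj: "inj_on \<sigma> {1,2,3}" and sim: "\<sigma> ` {1,2,3} = {1,2,3}" by (auto simp: \<sigma>_def inj_on_def)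
  have sym2: "q i T = Ry *v q (\<sigma> i) (2 - T)" if i: "i \<in> {1,2,3}" for i T
  proof (rule uniqueness[OF sq sol_transform[OF sq Ry_norm sinj sim] nq nocoll_transform[OF nq Ry_norm sinj sim] _ i, of 1 2])
    show "\<forall>i\<in>{1,2,3}. q i 1 = Ry *v q (\<sigma> i) (2 - 1) \<and> v i 1 = - (Ry *v v (\<sigma> i) (2 - 1))"
      using q1 vy1 f2 by (auto simp: Ry_mv vec2_eq \<sigma>_def)
  qed
  show ?thesis
  proof (intro allI conjI ballI)
    fix t
    show "q i t = Rx *v q i (- t)" if "i \<in> {1,2,3}" for i using sym1[OF that, of t] by simp
    have r: "q i (t + 2) = (Rx ** Ry) *v q (\<sigma> i) t" if "i \<in> {1,2,3}" for i
    proof -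
      have "\<sigma> i \<in> {1,2,3}" using that by (auto simp: \<sigma>_def)
      hence "q (\<sigma> i) (-t) = Rx *v q (\<sigma> i) t" using sym1[of "\<sigma> i" "-t"] by simp
      thus ?thesis using sym2[OF that, of "t + 2"] by (simp add: RxRy Rx_mv Ry_mv vec2_eq)
    qed
    show "q 1 (t + 2) = (Rx ** Ry) *v q 1 t" using r[of 1] by (simp add: \<sigma>_def)
    show "q 2 (t + 2) = (Rx ** Ry) *v q 3 t" using r[of 2] by (simp add: \<sigma>_def)
    show "q 3 (t + 2) = (Rx ** Ry) *v q 2 t" using r[of 3] by (simp add: \<sigma>_def)
  qed
qed

end
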